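(* Let $s\ge0$. For every $\delta>0$ there exists $C_\delta>0$ such that for all $\alpha,M\in\mathbb{R}$ and all $u_1,u_2,u_3\in H^s(\mathbb{R})$, $\|T^{\alpha,M}(u_1,u_2,u_3)\|_{H^s}\le C_\delta\langle\alpha\rangle^{\delta}\langle M\rangle^{1/2+\delta}\prod_{j=1}^3\|u_j\|_{H^s}$.
   Context: (Setting of the cubic NLS.) $\langle a\rangle=(1+|a|^2)^{1/2}$; $\Xi=(\xi,\xi_1,\xi_2,\xi_3)$, $\Phi(\Xi)=(\xi-\xi_1)(\xi-\xi_3)$, $m(\Xi)=1$, and $\mathcal{F}[T^{\alpha,M}(u_1,u_2,u_3)](\xi)=\int_{\xi_1+\xi_2+\xi_3=\xi,\ |\Phi(\Xi)-\alpha|<M}\hat u_1(\xi_1)\hat u_2(\xi_2)\hat u_3(\xi_3)\,d\xi_1d\xi_3$. *)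

theory Defs
  imports "HOL-Analysis.Analysis"
begin

text \<open>Everything is stated on the Fourier side: a function u in H^s(R) is
represented by its Fourier transform v = u-hat, a complex-valued function on R.\<close>

definition jb :: "real \<Rightarrow> real" where
  "jb a = sqrt (1 + a\<^sup>2)"

definition Phi :: "real \<Rightarrow> real \<Rightarrow> real \<Rightarrow> real" where
  "Phi \<xi> \<xi>1 \<xi>3 = (\<xi> - \<xi>1) * (\<xi> - \<xi>3)"

definition in_Hs :: "real \<Rightarrow> (real \<Rightarrow> complex) \<Rightarrow> bool" where
  "in_Hs s v \<longleftrightarrow> v \<in> borel_measurable lborel \<and>
     integrable lborel (\<lambda>\<xi>. jb \<xi> powr (2 * s) * (cmod (v \<xi>))\<^sup>2)"

definition Hs_norm :: "real \<Rightarrow> (real \<Rightarrow> complex) \<Rightarrow> real" where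
  "Hs_norm s v = sqrt (\<integral> \<xi>. jb \<xi> powr (2 * s) * (cmod (v \<xi>))\<^sup>2 \<partial>lborel)"

definition Hs_enorm_sq :: "real \<Rightarrow> (real \<Rightarrow> complex) \<Rightarrow> ennreal" where
  "Hs_enorm_sq s v = (\<integral>\<^sup>+ \<xi>. ennreal (jb \<xi> powr (2 * s) * (cmod (v \<xi>))\<^sup>2) \<partial>lborel)"

text \<open>Fourier transform of T^{alpha,M}(u1,u2,u3) at xi, given the Fourier
transforms v1 v2 v3; integration over (xi1, xi3) with xi2 = xi - xi1 - xi3, m = 1.\<close>
definition T_hat :: "real \<Rightarrow> real \<Rightarrow> (real \<Rightarrow> complex) \<Rightarrow> (real \<Rightarrow> complex) \<Rightarrow>
    (real \<Rightarrow> complex) \<Rightarrow> real \<Rightarrow> complex" where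
  "T_hat \<alpha> M v1 v2 v3 \<xi> =
     (\<integral> p. indicator {p. \<bar>Phi \<xi> (fst p) (snd p) - \<alpha>\<bar> < M} p *
            v1 (fst p) * v2 (\<xi> - fst p - snd p) * v3 (snd p) \<partial>(lborel :: (real \<times> real) measure))"

end

theory Submission
  imports Defs
begin

lemma quad_meas:
  fixes b c M :: real
  assumes M: "M > 0"
  shows "(\<integral>\<^sup>+x. indicator {x. \<bar>x*x + b*x + c\<bar> < M} x \<partial>lborel) \<le> ennreal (2 * sqrt (2*M))"
proof -
  define d where "d = b*b/4 - c"
  define U where "U = sqrt (max (d+M) 0)"
  define L where "L = sqrt (max (d-M) 0)"
  have LU: "L \<le> U" unfolding L_def U_def using M by (simp add: real_sqrt_le_iff)
  have L0: "L \<ge> 0" unfolding L_def by simp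
  have "U\<^sup>2 \<le> L\<^sup>2 + 2*M" unfolding L_def U_def using M by auto
  hence "U \<le> sqrt (L\<^sup>2 + 2*M)" using LU L0 real_le_rsqrt by blast
  also have "\<dots> \<le> L + sqrt (2*M)"
    using sqrt_add_le_add_sqrt[of "L\<^sup>2" "2*M"] L0 M by simp
  finally have UL: "U - L \<le> sqrt (2*M)" by simp
  define I1 where "I1 = {-b/2-U..-b/2-L}"
  define I2 where "I2 = {-b/2+L..-b/2+U}"
  have sub: "{x. \<bar>x*x + b*x + c\<bar> < M} \<subseteq> I1 \<union> I2"
  proof
    fix x assume "x \<in> {x. \<bar>x*x + b*x + c\<bar> < M}"
    hence h: "\<bar>(x+b/2)\<^sup>2 - d\<bar> < M" unfolding d_def by (simp add: power2_eq_square algebra_simps)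
    define y where "y = x + b/2"
    have y1: "y\<^sup>2 < d + M" "y\<^sup>2 > d - M" using h unfolding y_def by auto
    have "\<bar>y\<bar> \<le> U" unfolding U_def using y1
      by (metis max.cobounded1 less_eq_real_def order_trans real_sqrt_abs real_sqrt_le_iff)
    moreover have "\<bar>y\<bar> \<ge> L" unfolding L_def using y1
      by (smt (verit) real_sqrt_abs real_sqrt_le_iff real_sqrt_zero)
    ultimately show "x \<in> I1 \<union> I2" unfolding I1_def I2_def y_def by auto
  qed
  have "(\<integral>\<^sup>+x. indicator {x. \<bar>x*x + b*x + c\<bar> < M} x \<partial>lborel) \<le> (\<integral>\<^sup>+x. indicator (I1 \<union> I2) x \<partial>lborel)"
    by (intro nn_integral_mono) (use sub in \<open>auto split: split_indicator\<close>)
  also have "\<dots> = emeasure lborel (I1 \<union> I2)" unfolding I1_def I2_def by simp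
  also have "\<dots> \<le> emeasure lborel I1 + emeasure lborel I2"
    unfolding I1_def I2_def by (intro emeasure_subadditive) auto
  also have "\<dots> = ennreal (U - L) + ennreal (U - L)" unfolding I1_def I2_def using LU by simp
  also have "\<dots> \<le> ennreal (sqrt (2*M)) + ennreal (sqrt (2*M))"
    using UL by (intro add_mono ennreal_leI) auto
  also have "\<dots> = ennreal (2 * sqrt (2*M))" using M by (subst ennreal_plus[symmetric]) auto
  finally show ?thesis .
qed

lemma step3:
  fixes f :: "real \<Rightarrow> ennreal"
  assumes M: "M > 0" and [measurable]: "f \<in> borel_measurable borel"
  shows "(\<integral>\<^sup>+x. \<integral>\<^sup>+y. indicator {p. \<bar>Phi \<xi> (fst p) (snd p) - \<alpha>\<bar> < M} (x,y) * f (\<xi>-x-y) \<partial>lborel \<partial>lborel)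
    \<le> ennreal (2 * sqrt (2*M)) * (\<integral>\<^sup>+z. f z \<partial>lborel)"
proof -
  let ?c = "ennreal (2 * sqrt (2*M))"
  have "(\<integral>\<^sup>+x. \<integral>\<^sup>+y. indicator {p. \<bar>Phi \<xi> (fst p) (snd p) - \<alpha>\<bar> < M} (x,y) * f (\<xi>-x-y) \<partial>lborel \<partial>lborel)
     = (\<integral>\<^sup>+x. \<integral>\<^sup>+s. indicator {p. \<bar>Phi \<xi> (fst p) (snd p) - \<alpha>\<bar> < M} (x,-x+s) * f (\<xi>-s) \<partial>lborel \<partial>lborel)"
  proof (rule nn_integral_cong)
    fix x :: real
    show "(\<integral>\<^sup>+y. indicator {p. \<bar>Phi \<xi> (fst p) (snd p) - \<alpha>\<bar> < M} (x,y) * f (\<xi>-x-y) \<partial>lborel)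
       = (\<integral>\<^sup>+s. indicator {p. \<bar>Phi \<xi> (fst p) (snd p) - \<alpha>\<bar> < M} (x,-x+s) * f (\<xi>-s) \<partial>lborel)"
      by (subst nn_integral_real_affine[where c=1 and t="-x"]) (auto simp: Phi_def)
  qed
  also have "\<dots> = (\<integral>\<^sup>+s. \<integral>\<^sup>+x. indicator {p. \<bar>Phi \<xi> (fst p) (snd p) - \<alpha>\<bar> < M} (x,-x+s) * f (\<xi>-s) \<partial>lborel \<partial>lborel)"
    by (rule lborel_pair.Fubini'[symmetric]) (simp add: Phi_def)
  also have "\<dots> = (\<integral>\<^sup>+s. f (\<xi>-s) * (\<integral>\<^sup>+x. indicator {x. \<bar>x*x + (-s)*x + (\<alpha> - \<xi>*(\<xi>-s))\<bar> < M} x \<partial>lborel) \<partial>lborel)"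
  proof (rule nn_integral_cong)
    fix s :: real
    have "(\<integral>\<^sup>+x. indicator {p. \<bar>Phi \<xi> (fst p) (snd p) - \<alpha>\<bar> < M} (x,-x+s) * f (\<xi>-s) \<partial>lborel)
        = (\<integral>\<^sup>+x. f (\<xi>-s) * indicator {x. \<bar>x*x + (-s)*x + (\<alpha> - \<xi>*(\<xi>-s))\<bar> < M} x \<partial>lborel)"
    proof (rule nn_integral_cong)
      fix x :: real
      have "\<bar>Phi \<xi> x (-x+s) - \<alpha>\<bar> = \<bar>x*x + (-s)*x + (\<alpha> - \<xi>*(\<xi>-s))\<bar>"
        unfolding Phi_def by (smt (verit) left_diff_distrib right_diff_distrib mult.commute)
      then show "indicator {p. \<bar>Phi \<xi> (fst p) (snd p) - \<alpha>\<bar> < M} (x,-x+s) * f (\<xi>-s)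
          = f (\<xi>-s) * indicator {x. \<bar>x*x + (-s)*x + (\<alpha> - \<xi>*(\<xi>-s))\<bar> < M} x"
        by (simp add: indicator_def mult.commute)
    qed
    also have "\<dots> = f (\<xi>-s) * (\<integral>\<^sup>+x. indicator {x. \<bar>x*x + (-s)*x + (\<alpha> - \<xi>*(\<xi>-s))\<bar> < M} x \<partial>lborel)"
      by (rule nn_integral_cmult) measurable
    finally show "(\<integral>\<^sup>+x. indicator {p. \<bar>Phi \<xi> (fst p) (snd p) - \<alpha>\<bar> < M} (x,-x+s) * f (\<xi>-s) \<partial>lborel) = \<dots>" .
  qed
  also have "\<dots> \<le> (\<integral>\<^sup>+s. f (\<xi>-s) * ?c \<partial>lborel)"
    by (intro nn_integral_mono mult_left_mono quad_meas M) auto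
  also have "\<dots> = (\<integral>\<^sup>+s. f (\<xi>-s) \<partial>lborel) * ?c"
    by (rule nn_integral_multc) measurable
  also have "(\<integral>\<^sup>+s. f (\<xi>-s) \<partial>lborel) = (\<integral>\<^sup>+z. f z \<partial>lborel)"
    by (subst nn_integral_real_affine[where c="-1" and t=\<xi>]) auto
  finally show ?thesis by (simp add: mult.commute)
qed

lemma step4:
  fixes g :: "real \<Rightarrow> real \<Rightarrow> ennreal"
  assumes M: "M > 0" and gm: "case_prod g \<in> borel_measurable (borel \<Otimes>\<^sub>M borel)"
  shows "(\<integral>\<^sup>+\<xi>. \<integral>\<^sup>+x. \<integral>\<^sup>+y. indicator {p. \<bar>Phi \<xi> (fst p) (snd p) - \<alpha>\<bar> < M} (x,y) * g x y \<partial>lborel \<partial>lborel \<partial>lborel)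
    \<le> ennreal (2 * sqrt (2*M)) * (\<integral>\<^sup>+x. \<integral>\<^sup>+y. g x y \<partial>lborel \<partial>lborel)"
proof -
  let ?c = "ennreal (2 * sqrt (2*M))"
  have gx[measurable]: "g x \<in> borel_measurable borel" for x
    using measurable_Pair2[OF gm, of x] by simp
  have "(\<integral>\<^sup>+\<xi>. \<integral>\<^sup>+x. \<integral>\<^sup>+y. indicator {p. \<bar>Phi \<xi> (fst p) (snd p) - \<alpha>\<bar> < M} (x,y) * g x y \<partial>lborel \<partial>lborel \<partial>lborel)
     = (\<integral>\<^sup>+\<xi>. \<integral>\<^sup>+x. \<integral>\<^sup>+y. of_bool (\<bar>(\<xi>-x)*(\<xi>-y) - \<alpha>\<bar> < M) * g x y \<partial>lborel \<partial>lborel \<partial>lborel)"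
    by (simp add: indicator_def Phi_def)
  also have "\<dots> = (\<integral>\<^sup>+x. \<integral>\<^sup>+\<xi>. \<integral>\<^sup>+y. of_bool (\<bar>(\<xi>-x)*(\<xi>-y) - \<alpha>\<bar> < M) * g x y \<partial>lborel \<partial>lborel \<partial>lborel)"
  proof -
    note [measurable] = gm
    show ?thesis by (rule lborel_pair.Fubini'[symmetric]) measurable
  qed
  also have "\<dots> = (\<integral>\<^sup>+x. \<integral>\<^sup>+y. \<integral>\<^sup>+\<xi>. of_bool (\<bar>(\<xi>-x)*(\<xi>-y) - \<alpha>\<bar> < M) * g x y \<partial>lborel \<partial>lborel \<partial>lborel)"
  proof (rule nn_integral_cong)
    fix x :: real
    show "(\<integral>\<^sup>+\<xi>. \<integral>\<^sup>+y. of_bool (\<bar>(\<xi>-x)*(\<xi>-y) - \<alpha>\<bar> < M) * g x y \<partial>lborel \<partial>lborel)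
      = (\<integral>\<^sup>+y. \<integral>\<^sup>+\<xi>. of_bool (\<bar>(\<xi>-x)*(\<xi>-y) - \<alpha>\<bar> < M) * g x y \<partial>lborel \<partial>lborel)"
      by (rule lborel_pair.Fubini') measurable
  qed
  also have "\<dots> = (\<integral>\<^sup>+x. \<integral>\<^sup>+y. g x y * (\<integral>\<^sup>+\<xi>. indicator {\<xi>. \<bar>\<xi>*\<xi> + (-(x+y))*\<xi> + (x*y - \<alpha>)\<bar> < M} \<xi> \<partial>lborel) \<partial>lborel \<partial>lborel)"
  proof (intro nn_integral_cong)
    fix x y :: real
    have "(\<integral>\<^sup>+\<xi>. of_bool (\<bar>(\<xi>-x)*(\<xi>-y) - \<alpha>\<bar> < M) * g x y \<partial>lborel)
       = (\<integral>\<^sup>+\<xi>. g x y * indicator {\<xi>. \<bar>\<xi>*\<xi> + (-(x+y))*\<xi> + (x*y - \<alpha>)\<bar> < M} \<xi> \<partial>lborel)"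
    proof (rule nn_integral_cong)
      fix \<xi> :: real
      have eq: "(\<xi>-x)*(\<xi>-y) - \<alpha> = \<xi>*\<xi> + (-(x+y))*\<xi> + (x*y - \<alpha>)"
        by (simp add: algebra_simps)
      show "of_bool (\<bar>(\<xi>-x)*(\<xi>-y) - \<alpha>\<bar> < M) * g x y
          = g x y * indicator {\<xi>. \<bar>\<xi>*\<xi> + (-(x+y))*\<xi> + (x*y - \<alpha>)\<bar> < M} \<xi>"
        by (subst eq) (simp add: indicator_def mult.commute)
    qed
    also have "\<dots> = g x y * (\<integral>\<^sup>+\<xi>. indicator {\<xi>. \<bar>\<xi>*\<xi> + (-(x+y))*\<xi> + (x*y - \<alpha>)\<bar> < M} \<xi> \<partial>lborel)"
      by (rule nn_integral_cmult) measurable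
    finally show "(\<integral>\<^sup>+\<xi>. of_bool (\<bar>(\<xi>-x)*(\<xi>-y) - \<alpha>\<bar> < M) * g x y \<partial>lborel) = \<dots>" .
  qed
  also have "\<dots> \<le> (\<integral>\<^sup>+x. \<integral>\<^sup>+y. g x y * ?c \<partial>lborel \<partial>lborel)"
    by (intro nn_integral_mono mult_left_mono quad_meas M) auto
  also have "\<dots> = (\<integral>\<^sup>+x. (\<integral>\<^sup>+y. g x y \<partial>lborel) * ?c \<partial>lborel)"
    by (intro nn_integral_cong nn_integral_multc) measurable
  also have "\<dots> = (\<integral>\<^sup>+x. \<integral>\<^sup>+y. g x y \<partial>lborel \<partial>lborel) * ?c"
  proof -
    note [measurable] = gm
    show ?thesis by (rule nn_integral_multc) measurable
  qed
  finally show ?thesis by (simp add: mult.commute)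
qed

lemma jb_ge1: "jb a \<ge> 1" unfolding jb_def by simp
lemma jb_pos: "jb a > 0" using jb_ge1[of a] by simp

lemma jb_tri:
  assumes s: "s \<ge> 0"
  shows "jb (a+b+c) powr s \<le> 3 powr (s/2) * jb a powr s * jb b powr s * jb c powr s"
proof -
  have sq: "(a+b+c)\<^sup>2 \<le> 3*(a\<^sup>2+b\<^sup>2+c\<^sup>2)"
    using sum_squares_ge_zero[of "a-b" "b-c"] by (smt (verit) power2_diff power2_sum sum_power2_ge_zero zero_le_power2)
  have "(1+a\<^sup>2)*(1+b\<^sup>2)*(1+c\<^sup>2) \<ge> 1 + a\<^sup>2 + b\<^sup>2 + c\<^sup>2"
    by (simp add: algebra_simps)
  hence h0: "3*(1 + a\<^sup>2 + b\<^sup>2 + c\<^sup>2) \<le> 3 * ((1+a\<^sup>2)*(1+b\<^sup>2)*(1+c\<^sup>2))" by (rule mult_left_mono) auto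
  have h: "1 + (a+b+c)\<^sup>2 \<le> 3 * ((1+a\<^sup>2)*(1+b\<^sup>2)*(1+c\<^sup>2))" 
    using sq h0 order_trans[of "1 + (a+b+c)\<^sup>2" "3*(1 + a\<^sup>2 + b\<^sup>2 + c\<^sup>2)"] by (smt (verit))
  have "jb (a+b+c) \<le> sqrt 3 * jb a * jb b * jb c"
    unfolding jb_def using real_sqrt_le_mono[OF h] by (simp add: real_sqrt_mult)
  hence "jb (a+b+c) powr s \<le> (sqrt 3 * jb a * jb b * jb c) powr s"
    using s jb_pos by (intro powr_mono2) (auto simp: less_imp_le)
  also have "\<dots> = sqrt 3 powr s * jb a powr s * jb b powr s * jb c powr s"
    using jb_pos by (simp add: powr_mult)
  also have "sqrt 3 powr s = 3 powr (s/2)"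
    by (simp add: powr_half_sqrt[symmetric] powr_powr)
  finally show ?thesis .
qed

lemma CS2:
  fixes F G :: "real \<Rightarrow> real \<Rightarrow> ennreal"
  assumes [measurable]: "case_prod F \<in> borel_measurable (lborel \<Otimes>\<^sub>M lborel)"
     "case_prod G \<in> borel_measurable (lborel \<Otimes>\<^sub>M lborel)"
  shows "(\<integral>\<^sup>+x. \<integral>\<^sup>+y. F x y * G x y \<partial>lborel \<partial>lborel)\<^sup>2
    \<le> (\<integral>\<^sup>+x. \<integral>\<^sup>+y. (F x y)\<^sup>2 \<partial>lborel \<partial>lborel) * (\<integral>\<^sup>+x. \<integral>\<^sup>+y. (G x y)\<^sup>2 \<partial>lborel \<partial>lborel)"
proof -
  have e1: "(\<integral>\<^sup>+x. \<integral>\<^sup>+y. F x y * G x y \<partial>lborel \<partial>lborel) = (\<integral>\<^sup>+p. case_prod F p * case_prod G p \<partial>(lborel \<Otimes>\<^sub>M lborel))"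
    using lborel.nn_integral_fst[of "\<lambda>p. case_prod F p * case_prod G p" lborel] by simp
  have e2: "(\<integral>\<^sup>+x. \<integral>\<^sup>+y. (F x y)\<^sup>2 \<partial>lborel \<partial>lborel) = (\<integral>\<^sup>+p. (case_prod F p)^2 \<partial>(lborel \<Otimes>\<^sub>M lborel))"
    using lborel.nn_integral_fst[of "\<lambda>p. (case_prod F p)^2" lborel] by simp
  have e3: "(\<integral>\<^sup>+x. \<integral>\<^sup>+y. (G x y)\<^sup>2 \<partial>lborel \<partial>lborel) = (\<integral>\<^sup>+p. (case_prod G p)^2 \<partial>(lborel \<Otimes>\<^sub>M lborel))"
    using lborel.nn_integral_fst[of "\<lambda>p. (case_prod G p)^2" lborel] by simp
  show ?thesis unfolding e1 e2 e3 by (rule Cauchy_Schwarz_nn_integral) measurable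
qed

lemma Hs_sq:
  assumes "in_Hs s v"
  shows "(\<integral>\<^sup>+z. (ennreal (jb z powr s * cmod (v z)))\<^sup>2 \<partial>lborel) = ennreal ((Hs_norm s v)\<^sup>2)"
proof -
  have m[measurable]: "v \<in> borel_measurable borel" using assms unfolding in_Hs_def by simp
  have int: "integrable lborel (\<lambda>\<xi>. jb \<xi> powr (2 * s) * (cmod (v \<xi>))\<^sup>2)" using assms unfolding in_Hs_def by simp
  have "(\<integral>\<^sup>+z. (ennreal (jb z powr s * cmod (v z)))\<^sup>2 \<partial>lborel) = (\<integral>\<^sup>+z. ennreal (jb z powr (2 * s) * (cmod (v z))\<^sup>2) \<partial>lborel)"
  proof (rule nn_integral_cong)
    fix z
    have "jb z powr (2 * s) = (jb z powr s)\<^sup>2" using jb_pos[of z]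
      by (simp add: power2_eq_square powr_add[symmetric])
    then show "(ennreal (jb z powr s * cmod (v z)))\<^sup>2 = ennreal (jb z powr (2 * s) * (cmod (v z))\<^sup>2)"
      using ennreal_power[of "jb z powr s * cmod (v z)" 2] by (simp add: power_mult_distrib)
  qed
  also have "\<dots> = ennreal (\<integral> z. jb z powr (2 * s) * (cmod (v z))\<^sup>2 \<partial>lborel)"
    by (rule nn_integral_eq_integral[OF int]) auto
  also have "(\<integral> z. jb z powr (2 * s) * (cmod (v z))\<^sup>2 \<partial>lborel) = (Hs_norm s v)\<^sup>2"
    unfolding Hs_norm_def by (simp add: integral_nonneg)
  finally show ?thesis .
qed

lemma T_bound:
  assumes [measurable]: "v1 \<in> borel_measurable borel" "v2 \<in> borel_measurable borel" "v3 \<in> borel_measurable borel"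
  shows "ennreal (cmod (T_hat \<alpha> M v1 v2 v3 \<xi>)) \<le>
    (\<integral>\<^sup>+x. \<integral>\<^sup>+y. ennreal (indicator {p. \<bar>Phi \<xi> (fst p) (snd p) - \<alpha>\<bar> < M} (x,y) * cmod (v1 x) * cmod (v2 (\<xi>-x-y)) * cmod (v3 y)) \<partial>lborel \<partial>lborel)"
proof -
  define f where "f = (\<lambda>p. indicator {p. \<bar>Phi \<xi> (fst p) (snd p) - \<alpha>\<bar> < M} p *
            v1 (fst p) * v2 (\<xi> - fst p - snd p) * v3 (snd p) :: complex)"
  have T: "T_hat \<alpha> M v1 v2 v3 \<xi> = integral\<^sup>L lborel f" unfolding T_hat_def f_def by simp
  have "(\<integral>\<^sup>+p. ennreal (norm (f p)) \<partial>(lborel::(real\<times>real) measure))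
      = (\<integral>\<^sup>+p. ennreal (norm (f p)) \<partial>(lborel \<Otimes>\<^sub>M lborel))" by (simp add: lborel_prod)
  also have "\<dots> = (\<integral>\<^sup>+x. \<integral>\<^sup>+y. ennreal (norm (f (x,y))) \<partial>lborel \<partial>lborel)"
    by (rule lborel.nn_integral_fst[symmetric]) (unfold f_def Phi_def, measurable)
  also have "\<dots> = (\<integral>\<^sup>+x. \<integral>\<^sup>+y. ennreal (indicator {p. \<bar>Phi \<xi> (fst p) (snd p) - \<alpha>\<bar> < M} (x,y) * cmod (v1 x) * cmod (v2 (\<xi>-x-y)) * cmod (v3 y)) \<partial>lborel \<partial>lborel)"
    unfolding f_def by (intro nn_integral_cong) (simp add: norm_mult indicator_def)
  finally have eq: "(\<integral>\<^sup>+p. ennreal (norm (f p)) \<partial>(lborel::(real\<times>real) measure)) = \<dots>" .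
  show ?thesis
  proof (cases "integrable lborel f")
    case True
    show ?thesis unfolding T eq[symmetric] using integral_norm_bound_ennreal[OF True] by simp
  next
    case False
    then show ?thesis unfolding T by (simp add: not_integrable_integral_eq)
  qed
qed

lemma pw:
  assumes s: "s \<ge> 0"
    and [measurable]: "v1 \<in> borel_measurable borel" "v2 \<in> borel_measurable borel" "v3 \<in> borel_measurable borel"
    and w1: "\<And>z. w1 z = jb z powr s * cmod (v1 z)"
    and w2: "\<And>z. w2 z = jb z powr s * cmod (v2 z)"
    and w3: "\<And>z. w3 z = jb z powr s * cmod (v3 z)"
    and [measurable]: "w1 \<in> borel_measurable borel" "w2 \<in> borel_measurable borel" "w3 \<in> borel_measurable borel"
  shows "ennreal (jb \<xi> powr (2 * s) * (cmod (T_hat \<alpha> M v1 v2 v3 \<xi>))\<^sup>2) \<le>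
     ennreal (3 powr s) * (\<integral>\<^sup>+x. \<integral>\<^sup>+y. indicator {p. \<bar>Phi \<xi> (fst p) (snd p) - \<alpha>\<bar> < M} (x,y) * ennreal (w1 x * w2 (\<xi>-x-y) * w3 y) \<partial>lborel \<partial>lborel)\<^sup>2"
proof -
  let ?A = "{p. \<bar>Phi \<xi> (fst p) (snd p) - \<alpha>\<bar> < M}"
  let ?I = "(\<integral>\<^sup>+x. \<integral>\<^sup>+y. indicator ?A (x,y) * ennreal (w1 x * w2 (\<xi>-x-y) * w3 y) \<partial>lborel \<partial>lborel)"
  let ?c = "ennreal (jb \<xi> powr s)"
  have "ennreal (jb \<xi> powr s * cmod (T_hat \<alpha> M v1 v2 v3 \<xi>)) = ?c * ennreal (cmod (T_hat \<alpha> M v1 v2 v3 \<xi>))"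
    by (simp add: ennreal_mult)
  also have "\<dots> \<le> ?c * (\<integral>\<^sup>+x. \<integral>\<^sup>+y. ennreal (indicator ?A (x,y) * cmod (v1 x) * cmod (v2 (\<xi>-x-y)) * cmod (v3 y)) \<partial>lborel \<partial>lborel)"
    by (intro mult_left_mono T_bound) auto
  also have "\<dots> = (\<integral>\<^sup>+x. ?c * \<integral>\<^sup>+y. ennreal (indicator ?A (x,y) * cmod (v1 x) * cmod (v2 (\<xi>-x-y)) * cmod (v3 y)) \<partial>lborel \<partial>lborel)"
    by (rule nn_integral_cmult[symmetric]) (unfold Phi_def, measurable)
  also have "\<dots> = (\<integral>\<^sup>+x. \<integral>\<^sup>+y. ?c * ennreal (indicator ?A (x,y) * cmod (v1 x) * cmod (v2 (\<xi>-x-y)) * cmod (v3 y)) \<partial>lborel \<partial>lborel)"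
    by (intro nn_integral_cong nn_integral_cmult[symmetric]) (unfold Phi_def, measurable)
  also have "\<dots> \<le> (\<integral>\<^sup>+x. \<integral>\<^sup>+y. ennreal (3 powr (s/2)) * (indicator ?A (x,y) * ennreal (w1 x * w2 (\<xi>-x-y) * w3 y)) \<partial>lborel \<partial>lborel)"
  proof (intro nn_integral_mono)
    fix x y :: real
    have j: "jb \<xi> powr s \<le> 3 powr (s/2) * jb x powr s * jb (\<xi>-x-y) powr s * jb y powr s"
      using jb_tri[OF s, of x "\<xi>-x-y" y] by simp
    have "jb \<xi> powr s * (cmod (v1 x) * cmod (v2 (\<xi>-x-y)) * cmod (v3 y))
       \<le> (3 powr (s/2) * jb x powr s * jb (\<xi>-x-y) powr s * jb y powr s) * (cmod (v1 x) * cmod (v2 (\<xi>-x-y)) * cmod (v3 y))"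
      by (intro mult_right_mono j) auto
    also have "\<dots> = 3 powr (s/2) * (w1 x * w2 (\<xi>-x-y) * w3 y)" unfolding w1 w2 w3 by (simp add: ac_simps)
    finally have r: "jb \<xi> powr s * (cmod (v1 x) * cmod (v2 (\<xi>-x-y)) * cmod (v3 y)) \<le> 3 powr (s/2) * (w1 x * w2 (\<xi>-x-y) * w3 y)" .
    show "?c * ennreal (indicator ?A (x,y) * cmod (v1 x) * cmod (v2 (\<xi>-x-y)) * cmod (v3 y))
        \<le> ennreal (3 powr (s/2)) * (indicator ?A (x,y) * ennreal (w1 x * w2 (\<xi>-x-y) * w3 y))"
    proof (cases "(x,y) \<in> ?A")
      case True
      have "?c * ennreal (indicator ?A (x,y) * cmod (v1 x) * cmod (v2 (\<xi>-x-y)) * cmod (v3 y))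
          = ennreal (jb \<xi> powr s * (cmod (v1 x) * cmod (v2 (\<xi>-x-y)) * cmod (v3 y)))"
        using True by (simp add: ennreal_mult ac_simps)
      also have "\<dots> \<le> ennreal (3 powr (s/2) * (w1 x * w2 (\<xi>-x-y) * w3 y))" using r by (rule ennreal_leI)
      also have "\<dots> = ennreal (3 powr (s/2)) * (indicator ?A (x,y) * ennreal (w1 x * w2 (\<xi>-x-y) * w3 y))"
        using True by (simp add: ennreal_mult w1 w2 w3)
      finally show ?thesis .
    next
      case False
      then show ?thesis by simp
    qed
  qed
  also have "\<dots> = (\<integral>\<^sup>+x. ennreal (3 powr (s/2)) * \<integral>\<^sup>+y. indicator ?A (x,y) * ennreal (w1 x * w2 (\<xi>-x-y) * w3 y) \<partial>lborel \<partial>lborel)"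
    by (intro nn_integral_cong nn_integral_cmult) (unfold Phi_def, measurable)
  also have "\<dots> = ennreal (3 powr (s/2)) * ?I"
    by (rule nn_integral_cmult) (unfold Phi_def, measurable)
  finally have main: "ennreal (jb \<xi> powr s * cmod (T_hat \<alpha> M v1 v2 v3 \<xi>)) \<le> ennreal (3 powr (s/2)) * ?I" .
  have "ennreal (jb \<xi> powr (2 * s) * (cmod (T_hat \<alpha> M v1 v2 v3 \<xi>))\<^sup>2) = (ennreal (jb \<xi> powr s * cmod (T_hat \<alpha> M v1 v2 v3 \<xi>)))\<^sup>2"
  proof -
    have "jb \<xi> powr (2 * s) = (jb \<xi> powr s)\<^sup>2" using jb_pos[of \<xi>]
      by (simp add: power2_eq_square powr_add[symmetric])
    then show ?thesis
      using ennreal_power[of "jb \<xi> powr s * cmod (T_hat \<alpha> M v1 v2 v3 \<xi>)" 2] by (simp add: power_mult_distrib)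
  qed
  also have "\<dots> \<le> (ennreal (3 powr (s/2)) * ?I)\<^sup>2" by (rule power_mono[OF main]) simp
  also have "\<dots> = ennreal (3 powr s) * ?I\<^sup>2"
  proof -
    have "(ennreal (3 powr (s/2)))\<^sup>2 = ennreal ((3 powr (s/2))\<^sup>2)" by (simp add: ennreal_power)
    also have "(3 powr (s/2))\<^sup>2 = (3::real) powr s" by (simp add: power2_eq_square powr_add[symmetric])
    finally show ?thesis by (simp add: power_mult_distrib)
  qed
  finally show ?thesis .
qed

lemma ennreal_prod5:
  fixes t q a b c :: real
  assumes "t \<ge> 0" "q \<ge> 0" "a \<ge> 0" "b \<ge> 0" "c \<ge> 0"
  shows "ennreal t * (ennreal q * ennreal a) * (ennreal q * (ennreal b * ennreal c))
   = ennreal (t * q * a * (q * (b * c)))"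
  using assms by (simp add: ennreal_mult ac_simps)

lemma jb_powr_meas[measurable]: "(\<lambda>z. jb z powr s) \<in> borel_measurable borel"
proof -
  have "continuous_on UNIV (\<lambda>z. jb z powr s)"
    unfolding jb_def by (intro continuous_intros) (auto, metis add_pos_nonneg zero_le_power2 zero_less_one less_irrefl)
  then show ?thesis by (rule borel_measurable_continuous_onI)
qed

lemma W_meas: "v \<in> borel_measurable borel \<Longrightarrow> (\<lambda>z. jb z powr s * cmod (v z :: complex)) \<in> borel_measurable borel"
  by measurable

theorem lemma6:
  fixes s :: real
  assumes "s \<ge> 0"
  shows "\<forall>\<delta>>0. \<exists>C>0. \<forall>\<alpha> M v1 v2 v3.
           in_Hs s v1 \<longrightarrow> in_Hs s v2 \<longrightarrow> in_Hs s v3 \<longrightarrow>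
           Hs_enorm_sq s (T_hat \<alpha> M v1 v2 v3)
             \<le> ennreal ((C * jb \<alpha> powr \<delta> * jb M powr (1/2 + \<delta>) *
                         Hs_norm s v1 * Hs_norm s v2 * Hs_norm s v3)\<^sup>2)"
proof (intro allI impI)
  fix \<delta> :: real assume d: "\<delta> > 0"
  define C where "C = sqrt (8 * 3 powr s)"
  have C0: "C > 0" unfolding C_def by simp
  show "\<exists>C>0. \<forall>\<alpha> M v1 v2 v3.
           in_Hs s v1 \<longrightarrow> in_Hs s v2 \<longrightarrow> in_Hs s v3 \<longrightarrow>
           Hs_enorm_sq s (T_hat \<alpha> M v1 v2 v3)
             \<le> ennreal ((C * jb \<alpha> powr \<delta> * jb M powr (1/2 + \<delta>) *
                         Hs_norm s v1 * Hs_norm s v2 * Hs_norm s v3)\<^sup>2)"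
  proof (intro exI[of _ C] conjI C0 allI impI)
    fix \<alpha> M :: real and v1 v2 v3 :: "real \<Rightarrow> complex"
    assume h1: "in_Hs s v1" and h2: "in_Hs s v2" and h3: "in_Hs s v3"
    have [measurable]: "v1 \<in> borel_measurable borel" "v2 \<in> borel_measurable borel" "v3 \<in> borel_measurable borel"
      using h1 h2 h3 unfolding in_Hs_def by auto
    show "Hs_enorm_sq s (T_hat \<alpha> M v1 v2 v3)
             \<le> ennreal ((C * jb \<alpha> powr \<delta> * jb M powr (1/2 + \<delta>) *
                         Hs_norm s v1 * Hs_norm s v2 * Hs_norm s v3)\<^sup>2)"
    proof (cases "M > 0")
      case False
      have "T_hat \<alpha> M v1 v2 v3 \<xi> = 0" for \<xi>
      proof -
        have "\<not> \<bar>Phi \<xi> (fst p) (snd p) - \<alpha>\<bar> < M" for p using False by linarith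
        then show ?thesis unfolding T_hat_def by (simp add: indicator_def)
      qed
      then show ?thesis unfolding Hs_enorm_sq_def by simp
    next
      case Mpos: True
      define w1 where "w1 z = jb z powr s * cmod (v1 z)" for z
      define w2 where "w2 z = jb z powr s * cmod (v2 z)" for z
      define w3 where "w3 z = jb z powr s * cmod (v3 z)" for z
      have [measurable]: "w1 \<in> borel_measurable borel" "w2 \<in> borel_measurable borel" "w3 \<in> borel_measurable borel"
        unfolding w1_def[abs_def] w2_def[abs_def] w3_def[abs_def] by (rule W_meas; fact)+
      have wnn: "w1 z \<ge> 0" "w2 z \<ge> 0" "w3 z \<ge> 0" for z unfolding w1_def w2_def w3_def by auto
      let ?c = "ennreal (2 * sqrt (2*M))"
      define N1 where "N1 = (\<integral>\<^sup>+z. (ennreal (w1 z))\<^sup>2 \<partial>lborel)"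
      define N2 where "N2 = (\<integral>\<^sup>+z. (ennreal (w2 z))\<^sup>2 \<partial>lborel)"
      define N3 where "N3 = (\<integral>\<^sup>+z. (ennreal (w3 z))\<^sup>2 \<partial>lborel)"
      have N1: "N1 = ennreal ((Hs_norm s v1)\<^sup>2)" unfolding N1_def w1_def by (rule Hs_sq[OF h1])
      have N2: "N2 = ennreal ((Hs_norm s v2)\<^sup>2)" unfolding N2_def w2_def by (rule Hs_sq[OF h2])
      have N3: "N3 = ennreal ((Hs_norm s v3)\<^sup>2)" unfolding N3_def w3_def by (rule Hs_sq[OF h3])
      define K where "K \<xi> = (\<integral>\<^sup>+x. \<integral>\<^sup>+y. indicator {p. \<bar>Phi \<xi> (fst p) (snd p) - \<alpha>\<bar> < M} (x,y) * (ennreal (w1 x * w3 y))\<^sup>2 \<partial>lborel \<partial>lborel)" for \<xi>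
      have Km[measurable]: "K \<in> borel_measurable borel" unfolding K_def Phi_def by measurable
      have pt: "ennreal (jb \<xi> powr (2 * s) * (cmod (T_hat \<alpha> M v1 v2 v3 \<xi>))\<^sup>2) \<le> ennreal (3 powr s) * (?c * N2 * K \<xi>)" for \<xi>
      proof -
        let ?A = "{p. \<bar>Phi \<xi> (fst p) (snd p) - \<alpha>\<bar> < M}"
        let ?I = "(\<integral>\<^sup>+x. \<integral>\<^sup>+y. indicator ?A (x,y) * ennreal (w1 x * w2 (\<xi>-x-y) * w3 y) \<partial>lborel \<partial>lborel)"
        let ?J = "(\<integral>\<^sup>+x. \<integral>\<^sup>+y. (indicator ?A (x,y) * ennreal (w2 (\<xi>-x-y)))\<^sup>2 \<partial>lborel \<partial>lborel)"
        have e1: "ennreal (jb \<xi> powr (2 * s) * (cmod (T_hat \<alpha> M v1 v2 v3 \<xi>))\<^sup>2) \<le> ennreal (3 powr s) * ?I\<^sup>2"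
          by (rule pw[OF assms]) (auto simp: w1_def w2_def w3_def)
        have e2: "?I = (\<integral>\<^sup>+x. \<integral>\<^sup>+y. (indicator ?A (x,y) * ennreal (w2 (\<xi>-x-y))) * (indicator ?A (x,y) * ennreal (w1 x * w3 y)) \<partial>lborel \<partial>lborel)"
          by (intro nn_integral_cong) (simp add: indicator_def ennreal_mult wnn ac_simps)
        have e3: "(\<integral>\<^sup>+x. \<integral>\<^sup>+y. (indicator ?A (x,y) * ennreal (w2 (\<xi>-x-y))) * (indicator ?A (x,y) * ennreal (w1 x * w3 y)) \<partial>lborel \<partial>lborel)\<^sup>2
             \<le> ?J * (\<integral>\<^sup>+x. \<integral>\<^sup>+y. (indicator ?A (x,y) * ennreal (w1 x * w3 y))\<^sup>2 \<partial>lborel \<partial>lborel)"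
          by (rule CS2) (unfold Phi_def, measurable)+
        have e4: "(\<integral>\<^sup>+x. \<integral>\<^sup>+y. (indicator ?A (x,y) * ennreal (w1 x * w3 y))\<^sup>2 \<partial>lborel \<partial>lborel) = K \<xi>"
          unfolding K_def by (intro nn_integral_cong) (simp add: indicator_def power2_eq_square)
        have e5: "?J = (\<integral>\<^sup>+x. \<integral>\<^sup>+y. indicator ?A (x,y) * (\<lambda>z. (ennreal (w2 z))\<^sup>2) (\<xi>-x-y) \<partial>lborel \<partial>lborel)"
          by (intro nn_integral_cong) (simp add: indicator_def power2_eq_square)
        have e6: "(\<integral>\<^sup>+x. \<integral>\<^sup>+y. indicator ?A (x,y) * (\<lambda>z. (ennreal (w2 z))\<^sup>2) (\<xi>-x-y) \<partial>lborel \<partial>lborel) \<le> ?c * N2"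
          unfolding N2_def by (rule step3[OF Mpos]) measurable
        have "?I\<^sup>2 \<le> ?J * K \<xi>" using e3 by (simp only: e2[symmetric] e4)
        also have "\<dots> \<le> (?c * N2) * K \<xi>" using e5 e6 by (intro mult_right_mono) auto
        finally have "?I\<^sup>2 \<le> (?c * N2) * K \<xi>" .
        hence "ennreal (3 powr s) * ?I\<^sup>2 \<le> ennreal (3 powr s) * ((?c * N2) * K \<xi>)" by (rule mult_left_mono) simp
        from order_trans[OF e1 this] show ?thesis .
      qed
      have f1: "Hs_enorm_sq s (T_hat \<alpha> M v1 v2 v3) \<le> (\<integral>\<^sup>+\<xi>. ennreal (3 powr s) * (?c * N2) * K \<xi> \<partial>lborel)"
        unfolding Hs_enorm_sq_def
      proof (rule nn_integral_mono)
        fix \<xi> :: real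
        show "ennreal (jb \<xi> powr (2 * s) * (cmod (T_hat \<alpha> M v1 v2 v3 \<xi>))\<^sup>2) \<le> ennreal (3 powr s) * (?c * N2) * K \<xi>"
          using pt[of \<xi>] by (simp only: mult.assoc)
      qed
      have f2: "(\<integral>\<^sup>+\<xi>. ennreal (3 powr s) * (?c * N2) * K \<xi> \<partial>lborel) = ennreal (3 powr s) * (?c * N2) * (\<integral>\<^sup>+\<xi>. K \<xi> \<partial>lborel)"
        by (rule nn_integral_cmult) measurable
      have f3: "(\<integral>\<^sup>+\<xi>. K \<xi> \<partial>lborel) \<le> ?c * (\<integral>\<^sup>+x. \<integral>\<^sup>+y. (ennreal (w1 x * w3 y))\<^sup>2 \<partial>lborel \<partial>lborel)"
        unfolding K_def by (rule step4[OF Mpos]) measurable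
      have f4: "(\<integral>\<^sup>+x. \<integral>\<^sup>+y. (ennreal (w1 x * w3 y))\<^sup>2 \<partial>lborel \<partial>lborel) = N1 * N3"
      proof -
        have "(\<integral>\<^sup>+x. \<integral>\<^sup>+y. (ennreal (w1 x * w3 y))\<^sup>2 \<partial>lborel \<partial>lborel) = (\<integral>\<^sup>+x. \<integral>\<^sup>+y. (ennreal (w1 x))\<^sup>2 * (ennreal (w3 y))\<^sup>2 \<partial>lborel \<partial>lborel)"
          by (intro nn_integral_cong) (simp add: ennreal_mult wnn power_mult_distrib)
        also have "\<dots> = (\<integral>\<^sup>+x. (ennreal (w1 x))\<^sup>2 * N3 \<partial>lborel)"
          unfolding N3_def by (intro nn_integral_cong nn_integral_cmult) measurable
        also have "\<dots> = N1 * N3" unfolding N1_def by (rule nn_integral_multc) measurable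
        finally show ?thesis .
      qed
      have "ennreal (3 powr s) * (?c * N2) * (\<integral>\<^sup>+\<xi>. K \<xi> \<partial>lborel) \<le> ennreal (3 powr s) * (?c * N2) * (?c * (N1 * N3))"
        using f3 f4 by (intro mult_left_mono) auto
      from order_trans[OF f1[unfolded f2] this] have "Hs_enorm_sq s (T_hat \<alpha> M v1 v2 v3) \<le> ennreal (3 powr s) * (?c * N2) * (?c * (N1 * N3))" .
      also have "\<dots> = ennreal (3 powr s * (2 * sqrt (2*M)) * (Hs_norm s v2)\<^sup>2 * ((2 * sqrt (2*M)) * ((Hs_norm s v1)\<^sup>2 * (Hs_norm s v3)\<^sup>2)))"
        unfolding N1 N2 N3 using Mpos by (intro ennreal_prod5) auto
      also have "\<dots> \<le> ennreal ((C * jb \<alpha> powr \<delta> * jb M powr (1/2 + \<delta>) *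
                         Hs_norm s v1 * Hs_norm s v2 * Hs_norm s v3)\<^sup>2)"
      proof (rule ennreal_leI)
        let ?H = "(Hs_norm s v1)\<^sup>2 * (Hs_norm s v2)\<^sup>2 * (Hs_norm s v3)\<^sup>2"
        have H0: "?H \<ge> 0" by simp
        have a1: "(jb \<alpha> powr \<delta>)\<^sup>2 \<ge> 1"
          using jb_ge1[of \<alpha>] d by (simp add: ge_one_powr_ge_zero one_le_power)
        have "jb M powr (1/2 + \<delta>) \<ge> jb M powr (1/2)"
          using jb_ge1[of M] d by (intro powr_mono) auto
        moreover have "jb M powr (1/2) = sqrt (jb M)" using jb_pos[of M] by (simp add: powr_half_sqrt)
        ultimately have "(jb M powr (1/2 + \<delta>))\<^sup>2 \<ge> (sqrt (jb M))\<^sup>2"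
          using jb_pos[of M] by (intro power_mono) auto
        hence b1: "(jb M powr (1/2 + \<delta>))\<^sup>2 \<ge> M"
        proof -
          have "(sqrt (jb M))\<^sup>2 = jb M" using jb_pos[of M] by simp
          moreover have "jb M \<ge> \<bar>M\<bar>" unfolding jb_def
            using real_sqrt_le_mono[of "M\<^sup>2" "1 + M\<^sup>2"] by simp
          ultimately show ?thesis using \<open>(jb M powr (1/2 + \<delta>))\<^sup>2 \<ge> (sqrt (jb M))\<^sup>2\<close> by linarith
        qed
        have ab: "(jb \<alpha> powr \<delta>)\<^sup>2 * (jb M powr (1/2 + \<delta>))\<^sup>2 \<ge> M"
          using mult_mono[OF a1 b1] Mpos by simp
        have "3 powr s * (2 * sqrt (2*M)) * (Hs_norm s v2)\<^sup>2 * ((2 * sqrt (2*M)) * ((Hs_norm s v1)\<^sup>2 * (Hs_norm s v3)\<^sup>2))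
            = (8 * 3 powr s) * M * ?H"
          using Mpos by (simp add: power2_eq_square algebra_simps)
        also have "\<dots> \<le> (8 * 3 powr s) * ((jb \<alpha> powr \<delta>)\<^sup>2 * (jb M powr (1/2 + \<delta>))\<^sup>2) * ?H"
          by (intro mult_right_mono mult_left_mono ab H0) auto
        also have "\<dots> = (C * jb \<alpha> powr \<delta> * jb M powr (1/2 + \<delta>) * Hs_norm s v1 * Hs_norm s v2 * Hs_norm s v3)\<^sup>2"
          unfolding C_def by (simp add: power_mult_distrib)
        finally show "3 powr s * (2 * sqrt (2*M)) * (Hs_norm s v2)\<^sup>2 * ((2 * sqrt (2*M)) * ((Hs_norm s v1)\<^sup>2 * (Hs_norm s v3)\<^sup>2))
            \<le> (C * jb \<alpha> powr \<delta> * jb M powr (1/2 + \<delta>) * Hs_norm s v1 * Hs_norm s v2 * Hs_norm s v3)\<^sup>2" .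
      qed
      finally show ?thesis .
    qed
  qed
qed

end
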